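(* Let $n\ge1$, $m\ge0$ and let $v,u$ be vertices of the Yoke graph $Y_{n,m}$. Then $d_{Y_{n,m}}(v,u)=d_{Z_{n,m}}(v-u,0)$, where $v-u=(v_0-u_0,\dots,v_{m+1}-u_{m+1})$ (differences in coordinates $0,m+1$ taken in $\mathbb{Z}_n$, in coordinates $1,\dots,m$ in $\mathbb{Z}$), which is a vertex of $Z_{n,m}$, and $d_G$ denotes graph distance in $G$.
   Context: Elements of $\mathbb{Z}_n$ are identified with representatives in $\{0,\dots,n-1\}$. For $S\subseteq\mathbb{Z}$, consider vertices $u=(u_0,\dots,u_{m+1})\in\mathbb{Z}_n\times S^m\times\mathbb{Z}_n$ with $\sum u_i\equiv0\pmod n$; $u,v$ adjacent if there is $0\leq i\leq m$ with $u_j=v_j$ for $j\notin\{i,i+1\}$ and either ($u_i=v_i+1$, $u_{i+1}=v_{i+1}-1$) or ($u_i=v_i-1$, $u_{i+1}=v_{i+1}+1$), arithmetic in coordinates $0,m+1$ being in $\mathbb{Z}_n$ and in coordinates $1,\dots,m$ in $\mathbb{Z}$. $Y_{n,m}$ is the case $S=\{0,1\}$ and $Z_{n,m}$ the case $S=\{-1,0,1\}$. $0$ is the all-zero vertex. *)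

theory Defs
  imports Main "HOL-Library.Extended_Nat"
begin

text \<open>Vertices are integer lists of length m+2, indexed 0..m+1. Coordinates 0 and m+1
  are elements of Z_n represented in {0..n-1}; coordinates 1..m lie in S.\<close>

definition vert :: "nat \<Rightarrow> nat \<Rightarrow> int set \<Rightarrow> int list set" where
  "vert n m S = {u. length u = m + 2 \<and> u ! 0 \<in> {0..<int n} \<and> u ! (m+1) \<in> {0..<int n}
      \<and> (\<forall>j\<in>{1..m}. u ! j \<in> S) \<and> sum_list u mod int n = 0}"

definition cnorm :: "nat \<Rightarrow> nat \<Rightarrow> nat \<Rightarrow> int \<Rightarrow> int" where
  "cnorm n m j x = (if j = 0 \<or> j = m + 1 then x mod int n else x)"

definition adj :: "nat \<Rightarrow> nat \<Rightarrow> int set \<Rightarrow> int list \<Rightarrow> int list \<Rightarrow> bool" where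
  "adj n m S u v \<longleftrightarrow> u \<in> vert n m S \<and> v \<in> vert n m S \<and>
     (\<exists>i\<le>m. (\<forall>j<m+2. j \<noteq> i \<and> j \<noteq> i + 1 \<longrightarrow> u ! j = v ! j) \<and>
        ((u ! i = cnorm n m i (v ! i + 1) \<and> u ! (i+1) = cnorm n m (i+1) (v ! (i+1) - 1)) \<or>
         (u ! i = cnorm n m i (v ! i - 1) \<and> u ! (i+1) = cnorm n m (i+1) (v ! (i+1) + 1))))"

definition Yadj :: "nat \<Rightarrow> nat \<Rightarrow> int list \<Rightarrow> int list \<Rightarrow> bool" where
  "Yadj n m = adj n m {0, 1}"

definition Zadj :: "nat \<Rightarrow> nat \<Rightarrow> int list \<Rightarrow> int list \<Rightarrow> bool" where
  "Zadj n m = adj n m {-1, 0, 1}"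

definition gdist :: "('a \<Rightarrow> 'a \<Rightarrow> bool) \<Rightarrow> 'a \<Rightarrow> 'a \<Rightarrow> enat" where
  "gdist A x y = Inf {enat k | k. (A ^^ k) x y}"

definition vsub :: "nat \<Rightarrow> nat \<Rightarrow> int list \<Rightarrow> int list \<Rightarrow> int list" where
  "vsub n m v u = map (\<lambda>j. cnorm n m j (v ! j - u ! j)) [0..<m+2]"

end

theory Submission
  imports Defs
begin

lemma cnorm_dvd: "int n dvd (cnorm n m j t - t)"
  unfolding cnorm_def by (auto simp: mod_eq_dvd_iff[symmetric] mod_mod_trivial)

lemma cnorm_mod: "cnorm n m j t mod int n = t mod int n"
  unfolding cnorm_def by auto

lemma cnorm_add: "cnorm n m j (cnorm n m j a + b) = cnorm n m j (a + b)"
  unfolding cnorm_def by (auto simp: mod_add_left_eq)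

lemma cnorm_diff: "cnorm n m j (cnorm n m j a - b) = cnorm n m j (a - b)"
  unfolding cnorm_def by (auto simp: mod_diff_left_eq)

lemma cnorm_mid: "1 \<le> j \<Longrightarrow> j \<le> m \<Longrightarrow> cnorm n m j t = t"
  unfolding cnorm_def by auto

lemma cnorm_vert: "v \<in> vert n m S \<Longrightarrow> j < m+2 \<Longrightarrow> cnorm n m j (v!j) = v!j"
  unfolding cnorm_def vert_def by auto

lemma dvd_range_eq: "0 \<le> (a::int) \<Longrightarrow> a < k \<Longrightarrow> 0 \<le> b \<Longrightarrow> b < k \<Longrightarrow> k dvd (a - b) \<Longrightarrow> a = b"
  by (metis mod_pos_pos_trivial mod_eq_dvd_iff)

lemma vsub_nth: "j < m + 2 \<Longrightarrow> vsub n m v u ! j = cnorm n m j (v!j - u!j)"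
  unfolding vsub_def by (simp del: upt_Suc)

lemma sum_list_nth: "length v = m + 2 \<Longrightarrow> sum_list v = (\<Sum>j<m+2. v!j)"
  by (simp add: sum_list_sum_nth atLeast0LessThan)

lemma vsub_vert:
  assumes n: "n \<ge> 1" and v: "v \<in> vert n m {0,1}" and u: "u \<in> vert n m {0,1}"
  shows "vsub n m v u \<in> vert n m {-1,0,1}"
proof -
  have lv: "length v = m+2" and lu: "length u = m+2" using v u by (auto simp: vert_def)
  have len: "length (vsub n m v u) = m+2" by (simp add: vsub_def)
  have c0: "vsub n m v u ! 0 \<in> {0..<int n}" using n by (simp add: vsub_nth cnorm_def)
  have c1: "vsub n m v u ! (m+1) \<in> {0..<int n}" using n by (simp add: vsub_nth cnorm_def)
  have mid: "\<forall>j\<in>{1..m}. vsub n m v u ! j \<in> {-1,0,1}"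
  proof
    fix j assume j: "j \<in> {1..m}"
    have "v!j \<in> {0,1}" "u!j \<in> {0,1}" using v u j by (auto simp: vert_def)
    then show "vsub n m v u ! j \<in> {-1,0,1}" using j by (auto simp: vsub_nth cnorm_mid)
  qed
  have "sum_list (vsub n m v u) = (\<Sum>j<m+2. cnorm n m j (v!j - u!j))"
    using len by (simp add: sum_list_nth vsub_nth)
  hence "sum_list (vsub n m v u) mod int n = (\<Sum>j<m+2. cnorm n m j (v!j - u!j) mod int n) mod int n"
    by (simp only: mod_sum_eq)
  also have "\<dots> = (\<Sum>j<m+2. (v!j - u!j) mod int n) mod int n"
    by (simp only: cnorm_mod)
  also have "\<dots> = (\<Sum>j<m+2. (v!j - u!j)) mod int n" by (simp only: mod_sum_eq)
  also have "\<dots> = (sum_list v - sum_list u) mod int n"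
    using lv lu by (simp add: sum_list_nth sum_subtractf)
  also have "\<dots> = 0" using v u by (simp add: vert_def mod_diff_eq[symmetric])
  finally show ?thesis using len c0 c1 mid by (simp add: vert_def)
qed

definition flow :: "nat \<Rightarrow> nat \<Rightarrow> int list \<Rightarrow> int list \<Rightarrow> (nat \<Rightarrow> int) \<Rightarrow> bool" where
  "flow n m x y f \<longleftrightarrow> int n dvd (y!0 - x!0 - f 0) \<and> (\<forall>j\<in>{1..m}. y!j = x!j + f j - f (j-1))
     \<and> int n dvd (y!(m+1) - x!(m+1) + f m)"

definition cost :: "nat \<Rightarrow> (nat \<Rightarrow> int) \<Rightarrow> nat" where
  "cost m f = (\<Sum>j\<le>m. nat \<bar>f j\<bar>)"

lemma cost_upd: "i \<le> m \<Longrightarrow> cost m (f(i := a)) + nat \<bar>f i\<bar> = cost m f + nat \<bar>a\<bar>"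
proof -
  assume i: "i \<le> m"
  have "cost m (f(i := a)) = nat \<bar>a\<bar> + (\<Sum>j\<in>{..m}-{i}. nat \<bar>f j\<bar>)"
    unfolding cost_def using i by (subst sum.remove[of _ i]) auto
  moreover have "cost m f = nat \<bar>f i\<bar> + (\<Sum>j\<in>{..m}-{i}. nat \<bar>f j\<bar>)"
    unfolding cost_def using i by (subst sum.remove[of _ i]) auto
  ultimately show ?thesis by simp
qed

lemma flow_refl: "flow n m x x (\<lambda>_. 0)"
  unfolding flow_def by simp

lemma flow_comp: "flow n m x z f \<Longrightarrow> flow n m x y g \<Longrightarrow> flow n m y z (\<lambda>j. f j - g j)"
  unfolding flow_def
proof (intro conjI ballI; elim conjE)
  assume a: "int n dvd z ! 0 - x ! 0 - f 0" "int n dvd y ! 0 - x ! 0 - g 0"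
  have "z ! 0 - y ! 0 - (f 0 - g 0) = (z ! 0 - x ! 0 - f 0) - (y ! 0 - x ! 0 - g 0)" by simp
  then show "int n dvd z ! 0 - y ! 0 - (f 0 - g 0)" using a by (metis dvd_diff)
next
  assume a: "int n dvd z ! (m+1) - x ! (m+1) + f m" "int n dvd y ! (m+1) - x ! (m+1) + g m"
  have "z ! (m+1) - y ! (m+1) + (f m - g m) = (z ! (m+1) - x ! (m+1) + f m) - (y ! (m+1) - x ! (m+1) + g m)" by simp
  then show "int n dvd z ! (m+1) - y ! (m+1) + (f m - g m)" using a by (metis dvd_diff)
next
  fix j assume "j \<in> {1..m}" "\<forall>j\<in>{1..m}. z ! j = x ! j + f j - f (j - 1)"
    "\<forall>j\<in>{1..m}. y ! j = x ! j + g j - g (j - 1)"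
  then show "z ! j = y ! j + (f j - g j) - (f (j - 1) - g (j - 1))" by auto
qed

lemma flow_step:
  assumes fl: "flow n m x z f" and i: "i \<le> m"
    and eq: "\<forall>j<m+2. j \<noteq> i \<and> j \<noteq> i + 1 \<longrightarrow> z!j = y!j"
    and zi: "z!i = cnorm n m i (y!i - d)" and zi1: "z!(i+1) = cnorm n m (i+1) (y!(i+1) + d)"
  shows "flow n m x y (f(i := f i + d))"
  unfolding flow_def
proof (intro conjI ballI)
  have f0: "int n dvd (z!0 - x!0 - f 0)" using fl by (simp add: flow_def)
  show "int n dvd y ! 0 - x ! 0 - (f(i := f i + d)) 0"
  proof (cases "i = 0")
    case True
    have "int n dvd (z!0 - (y!0 - d))" using zi True by (metis cnorm_dvd)
    moreover have "y ! 0 - x ! 0 - (f(i := f i + d)) 0 = (z!0 - x!0 - f 0) - (z!0 - (y!0 - d))"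
      using True by simp
    ultimately show ?thesis using f0 by (metis dvd_diff)
  next
    case False
    then show ?thesis using eq f0 by simp
  qed
next
  have f0: "int n dvd (z!(m+1) - x!(m+1) + f m)" using fl by (simp add: flow_def)
  show "int n dvd y ! (m+1) - x ! (m+1) + (f(i := f i + d)) m"
  proof (cases "i = m")
    case True
    have "int n dvd (z!(m+1) - (y!(m+1) + d))" using zi1 True by (metis cnorm_dvd)
    moreover have "y ! (m+1) - x ! (m+1) + (f(i := f i + d)) m = (z!(m+1) - x!(m+1) + f m) - (z!(m+1) - (y!(m+1) + d))"
      using True by simp
    ultimately show ?thesis using f0 by (metis dvd_diff)
  next
    case False
    then show ?thesis using eq f0 i by simp
  qed
next
  fix j assume j: "j \<in> {1..m}"
  have fj: "z!j = x!j + f j - f (j-1)" using fl j by (simp add: flow_def)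
  show "y ! j = x ! j + (f(i := f i + d)) j - (f(i := f i + d)) (j - 1)"
  proof -
    consider "j = i" | "j = i + 1" | "j \<noteq> i \<and> j \<noteq> i + 1" by blast
    then show ?thesis
    proof cases
      case 1
      then have "z!i = y!i - d" using zi j by (simp add: cnorm_mid)
      then show ?thesis using 1 fj j by auto
    next
      case 2
      then have "z!(i+1) = y!(i+1) + d" using zi1 j by (simp add: cnorm_mid)
      then show ?thesis using 2 fj j by auto
    next
      case 3
      then show ?thesis using fj j eq by auto
    qed
  qed
qed

lemma walk_flow: "(adj n m S ^^ k) x y \<Longrightarrow> \<exists>f. flow n m x y f \<and> cost m f \<le> k"
proof (induction k arbitrary: y)
  case 0
  then show ?case using flow_refl[of n m x] by (auto simp: cost_def)
next
  case (Suc k)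
  then obtain z where w: "(adj n m S ^^ k) x z" and a: "adj n m S z y" by auto
  obtain f where fl: "flow n m x z f" and c: "cost m f \<le> k" using Suc.IH[OF w] by blast
  obtain i where i: "i \<le> m" and eq: "\<forall>j<m+2. j \<noteq> i \<and> j \<noteq> i + 1 \<longrightarrow> z!j = y!j"
    and disj: "(z ! i = cnorm n m i (y ! i + 1) \<and> z ! (i+1) = cnorm n m (i+1) (y ! (i+1) - 1)) \<or>
         (z ! i = cnorm n m i (y ! i - 1) \<and> z ! (i+1) = cnorm n m (i+1) (y ! (i+1) + 1))"
    using a unfolding adj_def by blast
  from disj obtain d where d: "d = 1 \<or> d = -1" and zi: "z!i = cnorm n m i (y!i - d)"
    and zi1: "z!(i+1) = cnorm n m (i+1) (y!(i+1) + d)"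
  proof
    assume "z ! i = cnorm n m i (y ! i + 1) \<and> z ! (i+1) = cnorm n m (i+1) (y ! (i+1) - 1)"
    then show ?thesis using that[of "-1"] by simp
  next
    assume "z ! i = cnorm n m i (y ! i - 1) \<and> z ! (i+1) = cnorm n m (i+1) (y ! (i+1) + 1)"
    then show ?thesis using that[of "1"] by simp
  qed
  have "flow n m x y (f(i := f i + d))" using flow_step[OF fl i eq zi zi1] .
  moreover have "cost m (f(i := f i + d)) \<le> Suc k"
    using cost_upd[OF i, of f "f i + d"] c d by auto
  ultimately show ?case by blast
qed

lemma Yadj_Zadj:
  assumes n: "n \<ge> 1" and u: "u \<in> vert n m {0,1}" and a: "Yadj n m z y"
  shows "Zadj n m (vsub n m z u) (vsub n m y u)"
proof -
  have z: "z \<in> vert n m {0,1}" and y: "y \<in> vert n m {0,1}" using a by (auto simp: Yadj_def adj_def)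
  obtain i where i: "i \<le> m" and eq: "\<forall>j<m+2. j \<noteq> i \<and> j \<noteq> i + 1 \<longrightarrow> z!j = y!j"
    and disj: "(z ! i = cnorm n m i (y ! i + 1) \<and> z ! (i+1) = cnorm n m (i+1) (y ! (i+1) - 1)) \<or>
         (z ! i = cnorm n m i (y ! i - 1) \<and> z ! (i+1) = cnorm n m (i+1) (y ! (i+1) + 1))"
    using a unfolding Yadj_def adj_def by blast
  have key: "cnorm n m j (cnorm n m j (a + e) - b) = cnorm n m j (cnorm n m j (a - b) + e)" for j a b e
    by (simp add: cnorm_diff cnorm_add diff_add_eq)
  have eq': "\<forall>j<m+2. j \<noteq> i \<and> j \<noteq> i + 1 \<longrightarrow> vsub n m z u ! j = vsub n m y u ! j"
    using eq by (simp add: vsub_nth)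
  have "(vsub n m z u ! i = cnorm n m i (vsub n m y u ! i + 1) \<and> vsub n m z u ! (i+1) = cnorm n m (i+1) (vsub n m y u ! (i+1) - 1)) \<or>
         (vsub n m z u ! i = cnorm n m i (vsub n m y u ! i - 1) \<and> vsub n m z u ! (i+1) = cnorm n m (i+1) (vsub n m y u ! (i+1) + 1))"
    using disj i key[of _ _ 1] key[of _ _ "-1"] by (auto simp: vsub_nth)
  then show ?thesis using vsub_vert[OF n z u] vsub_vert[OF n y u] i eq'
    unfolding Zadj_def adj_def by blast
qed

lemma walk_map:
  assumes n: "n \<ge> 1" and u: "u \<in> vert n m {0,1}"
  shows "(Yadj n m ^^ k) w y \<Longrightarrow> (Zadj n m ^^ k) (vsub n m w u) (vsub n m y u)"
proof (induction k arbitrary: y)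
  case 0
  then show ?case by simp
next
  case (Suc k)
  then obtain z where w: "(Yadj n m ^^ k) w z" and a: "Yadj n m z y" by auto
  show ?case using Suc.IH[OF w] Yadj_Zadj[OF n u a] by auto
qed

lemma flow_mid: "flow n m v u f \<Longrightarrow> 1 \<le> j \<Longrightarrow> j \<le> m \<Longrightarrow> u!j = v!j + f j - f (j-1)"
  by (simp add: flow_def)

lemma vmid: "v \<in> vert n m S \<Longrightarrow> 1 \<le> j \<Longrightarrow> j \<le> m \<Longrightarrow> v!j \<in> S"
  by (simp add: vert_def)

lemma goodR_pos:
  assumes v: "v \<in> vert n m {0,1}" and u: "u \<in> vert n m {0,1}" and fl: "flow n m v u f"
  shows "a \<le> m \<Longrightarrow> f a > 0 \<Longrightarrow> (a = 0 \<or> v!a = 0) \<Longrightarrow>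
    \<exists>j. j \<le> m \<and> f j > 0 \<and> (j = 0 \<or> v!j = 0) \<and> (j = m \<or> v!(j+1) = 1)"
proof (induction "m - a" arbitrary: a)
  case 0
  then show ?case by auto
next
  case (Suc k)
  show ?case
  proof (cases "v!(a+1) = 1")
    case True then show ?thesis using Suc.prems by blast
  next
    case False
    have am: "a < m" using Suc.hyps by simp
    have v1: "v!(a+1) = 0" using vmid[OF v, of "a+1"] am False by auto
    have "u!(a+1) = v!(a+1) + f (a+1) - f a" using flow_mid[OF fl, of "a+1"] am by simp
    moreover have "u!(a+1) \<in> {0,1}" using vmid[OF u, of "a+1"] am by auto
    ultimately have "f (a+1) > 0" using v1 Suc.prems by auto
    then show ?thesis using Suc.hyps(1)[of "a+1"] Suc.hyps(2) am v1 by auto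
  qed
qed

lemma goodL_pos:
  assumes v: "v \<in> vert n m {0,1}" and u: "u \<in> vert n m {0,1}" and fl: "flow n m v u f"
  shows "b \<le> m \<Longrightarrow> f b > 0 \<Longrightarrow> \<exists>a. a \<le> m \<and> f a > 0 \<and> (a = 0 \<or> v!a = 0)"
proof (induction b)
  case 0 then show ?case by auto
next
  case (Suc b)
  show ?case
  proof (cases "f b > 0")
    case True then show ?thesis using Suc by auto
  next
    case False
    have "u!(Suc b) = v!(Suc b) + f (Suc b) - f b" using flow_mid[OF fl, of "Suc b"] Suc.prems by simp
    moreover have "u!(Suc b) \<in> {0,1}" "v!(Suc b) \<in> {0,1}" using vmid[OF u] vmid[OF v] Suc.prems by auto
    ultimately have "v!(Suc b) = 0" using False Suc.prems by auto
    then show ?thesis using Suc.prems by blast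
  qed
qed

lemma goodR_neg:
  assumes v: "v \<in> vert n m {0,1}" and u: "u \<in> vert n m {0,1}" and fl: "flow n m v u f"
  shows "a \<le> m \<Longrightarrow> f a < 0 \<Longrightarrow> (a = 0 \<or> v!a = 1) \<Longrightarrow>
    \<exists>j. j \<le> m \<and> f j < 0 \<and> (j = 0 \<or> v!j = 1) \<and> (j = m \<or> v!(j+1) = 0)"
proof (induction "m - a" arbitrary: a)
  case 0
  then show ?case by auto
next
  case (Suc k)
  show ?case
  proof (cases "v!(a+1) = 0")
    case True then show ?thesis using Suc.prems by blast
  next
    case False
    have am: "a < m" using Suc.hyps by simp
    have v1: "v!(a+1) = 1" using vmid[OF v, of "a+1"] am False by auto
    have "u!(a+1) = v!(a+1) + f (a+1) - f a" using flow_mid[OF fl, of "a+1"] am by simp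
    moreover have "u!(a+1) \<in> {0,1}" using vmid[OF u, of "a+1"] am by auto
    ultimately have "f (a+1) < 0" using v1 Suc.prems by auto
    then show ?thesis using Suc.hyps(1)[of "a+1"] Suc.hyps(2) am v1 by auto
  qed
qed

lemma goodL_neg:
  assumes v: "v \<in> vert n m {0,1}" and u: "u \<in> vert n m {0,1}" and fl: "flow n m v u f"
  shows "b \<le> m \<Longrightarrow> f b < 0 \<Longrightarrow> \<exists>a. a \<le> m \<and> f a < 0 \<and> (a = 0 \<or> v!a = 1)"
proof (induction b)
  case 0 then show ?case by auto
next
  case (Suc b)
  show ?case
  proof (cases "f b < 0")
    case True then show ?thesis using Suc by auto
  next
    case False
    have "u!(Suc b) = v!(Suc b) + f (Suc b) - f b" using flow_mid[OF fl, of "Suc b"] Suc.prems by simp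
    moreover have "u!(Suc b) \<in> {0,1}" "v!(Suc b) \<in> {0,1}" using vmid[OF u] vmid[OF v] Suc.prems by auto
    ultimately have "v!(Suc b) = 1" using False Suc.prems by auto
    then show ?thesis using Suc.prems by blast
  qed
qed

lemma good_edge:
  assumes v: "v \<in> vert n m {0,1}" and u: "u \<in> vert n m {0,1}" and fl: "flow n m v u f"
    and i: "i \<le> m" "f i \<noteq> 0"
  shows "\<exists>j d. j \<le> m \<and> ((d = 1 \<and> f j > 0) \<or> (d = -1 \<and> f j < 0)) \<and>
     (j = 0 \<or> v!j + d \<in> {0,1}) \<and> (j = m \<or> v!(j+1) - d \<in> {0,1})"
proof (cases "f i > 0")
  case True
  obtain a where "a \<le> m" "f a > 0" "a = 0 \<or> v!a = 0" using goodL_pos[OF v u fl i(1) True] by blast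
  then obtain j where "j \<le> m \<and> f j > 0 \<and> (j = 0 \<or> v!j = 0) \<and> (j = m \<or> v!(j+1) = 1)"
    using goodR_pos[OF v u fl] by blast
  then show ?thesis by (intro exI[of _ j] exI[of _ 1]) auto
next
  case False
  then have neg: "f i < 0" using i by simp
  obtain a where "a \<le> m" "f a < 0" "a = 0 \<or> v!a = 1" using goodL_neg[OF v u fl i(1) neg] by blast
  then obtain j where "j \<le> m \<and> f j < 0 \<and> (j = 0 \<or> v!j = 1) \<and> (j = m \<or> v!(j+1) = 0)"
    using goodR_neg[OF v u fl] by blast
  then show ?thesis by (intro exI[of _ j] exI[of _ "-1"]) auto
qed

lemma sum_list_upd_int: "k < length xs \<Longrightarrow> sum_list (xs[k := x]) = sum_list xs + x - xs!k" for xs :: "int list"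
  by (induction xs arbitrary: k) (auto split: nat.split)

lemma move:
  assumes n: "n \<ge> 1" and v: "v \<in> vert n m {0,1}" and j: "j \<le> m" and d: "d = 1 \<or> d = -1"
    and c1: "j = 0 \<or> v!j + d \<in> {0,1}" and c2: "j = m \<or> v!(j+1) - d \<in> {0,1}"
  defines "v' \<equiv> v[j := cnorm n m j (v!j + d), j+1 := cnorm n m (j+1) (v!(j+1) - d)]"
  shows "v' \<in> vert n m {0,1} \<and> Yadj n m v v' \<and>
    (\<forall>k<m+2. k \<noteq> j \<and> k \<noteq> j + 1 \<longrightarrow> v!k = v'!k) \<and>
    v!j = cnorm n m j (v'!j - d) \<and> v!(j+1) = cnorm n m (j+1) (v'!(j+1) + d)"
proof -
  have lv: "length v = m+2" using v by (simp add: vert_def)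
  have lv': "length v' = m+2" using lv by (simp add: v'_def)
  have vj: "v'!j = cnorm n m j (v!j + d)" using lv j by (simp add: v'_def nth_list_update)
  have vj1: "v'!(j+1) = cnorm n m (j+1) (v!(j+1) - d)" using lv j by (simp add: v'_def)
  have oth: "\<forall>k<m+2. k \<noteq> j \<and> k \<noteq> j + 1 \<longrightarrow> v!k = v'!k" by (simp add: v'_def)
  have e1: "v!j = cnorm n m j (v'!j - d)"
    using vj cnorm_diff[of n m j "v!j + d" d] cnorm_vert[OF v, of j] j by simp
  have e2: "v!(j+1) = cnorm n m (j+1) (v'!(j+1) + d)"
    using vj1 cnorm_add[of n m "j+1" "v!(j+1) - d" d] cnorm_vert[OF v, of "j+1"] j by simp
  have r0: "v'!0 \<in> {0..<int n}"
  proof (cases "j = 0")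
    case True then show ?thesis using vj n by (simp add: cnorm_def)
  next
    case False then show ?thesis using oth v by (simp add: vert_def)
  qed
  have r1: "v'!(m+1) \<in> {0..<int n}"
  proof (cases "j = m")
    case True then show ?thesis using vj1 n by (simp add: cnorm_def)
  next
    case False then show ?thesis using oth v j by (simp add: vert_def)
  qed
  have mid: "\<forall>k\<in>{1..m}. v'!k \<in> {0,1}"
  proof
    fix k assume k: "k \<in> {1..m}"
    consider "k = j" | "k = j+1" | "k \<noteq> j \<and> k \<noteq> j+1" by blast
    then show "v'!k \<in> {0,1}"
    proof cases
      case 1 then show ?thesis using k vj c1 by (simp add: cnorm_mid)
    next
      case 2 then show ?thesis using k vj1 c2 by (simp add: cnorm_mid)
    next
      case 3 then show ?thesis using k oth vmid[OF v, of k] by auto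
    qed
  qed
  have "sum_list v' = sum_list v + (cnorm n m j (v!j + d) - (v!j + d)) + (cnorm n m (j+1) (v!(j+1) - d) - (v!(j+1) - d))"
  proof -
    have s1: "sum_list (v[j := cnorm n m j (v!j + d)]) = sum_list v + cnorm n m j (v!j + d) - v!j"
      using lv j by (simp add: sum_list_upd_int)
    have s2: "sum_list v' = sum_list (v[j := cnorm n m j (v!j + d)]) + cnorm n m (j+1) (v!(j+1) - d) - v!(j+1)"
      unfolding v'_def using lv j by (subst sum_list_upd_int) auto
    show ?thesis using s1 s2 by simp
  qed
  moreover have "int n dvd sum_list v" using v by (simp add: vert_def mod_eq_0_iff_dvd)
  ultimately have "int n dvd sum_list v'" using cnorm_dvd by (metis dvd_add)
  then have vv': "v' \<in> vert n m {0,1}" using lv' r0 r1 mid by (simp add: vert_def)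
  have "Yadj n m v v'"
    unfolding Yadj_def adj_def
  proof (intro conjI exI[of _ j])
    show "(\<forall>k<m + 2. k \<noteq> j \<and> k \<noteq> j + 1 \<longrightarrow> v ! k = v' ! k)" by (rule oth)
    show "v ! j = cnorm n m j (v' ! j + 1) \<and> v ! (j + 1) = cnorm n m (j + 1) (v' ! (j + 1) - 1) \<or>
      v ! j = cnorm n m j (v' ! j - 1) \<and> v ! (j + 1) = cnorm n m (j + 1) (v' ! (j + 1) + 1)"
      using e1 e2 d by auto
  qed (use v vv' j in auto)
  then show ?thesis using vv' oth e1 e2 by blast
qed

lemma build:
  assumes n: "n \<ge> 1" and u: "u \<in> vert n m {0,1}"
  shows "v \<in> vert n m {0,1} \<Longrightarrow> flow n m v u f \<Longrightarrow> cost m f = k \<Longrightarrow> (Yadj n m ^^ k) v u"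
proof (induction k arbitrary: v f)
  case 0
  have f0: "\<forall>j\<le>m. f j = 0" using 0 by (simp add: cost_def)
  have lv: "length v = m+2" and lu: "length u = m+2" using 0 u by (auto simp: vert_def)
  have "v = u"
  proof (rule nth_equalityI)
    show "length v = length u" using lv lu by simp
    fix k assume "k < length v"
    then have k: "k < m + 2" using lv by simp
    consider "k = 0" | "k = m+1" | "1 \<le> k \<and> k \<le> m" using k by linarith
    then show "v!k = u!k"
    proof cases
      case 1
      have "int n dvd (u!0 - v!0)" using 0 f0 by (simp add: flow_def)
      then show ?thesis using 1 u 0(1) dvd_range_eq[of "u!0" "int n" "v!0"] by (simp add: vert_def)
    next
      case 2
      have "int n dvd (u!(m+1) - v!(m+1))" using 0 f0 by (simp add: flow_def)
      then show ?thesis using 2 u 0(1) dvd_range_eq[of "u!(m+1)" "int n" "v!(m+1)"] by (simp add: vert_def)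
    next
      case 3
      then show ?thesis using flow_mid[OF 0(2), of k] f0[rule_format, of k] f0[rule_format, of "k-1"] by auto
    qed
  qed
  then show ?case by simp
next
  case (Suc k)
  have "\<exists>i\<le>m. f i \<noteq> 0"
  proof (rule ccontr)
    assume "\<not> ?thesis"
    then have "cost m f = 0" by (simp add: cost_def)
    then show False using Suc.prems by simp
  qed
  then obtain i where i: "i \<le> m" "f i \<noteq> 0" by blast
  obtain j d where j: "j \<le> m" and sg: "(d = 1 \<and> f j > 0) \<or> (d = -1 \<and> f j < 0)"
    and c1: "j = 0 \<or> v!j + d \<in> {0,1}" and c2: "j = m \<or> v!(j+1) - d \<in> {0,1}"
    using good_edge[OF Suc.prems(1) u Suc.prems(2) i] by blast
  have d: "d = 1 \<or> d = -1" using sg by auto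
  define v' where "v' = v[j := cnorm n m j (v!j + d), j+1 := cnorm n m (j+1) (v!(j+1) - d)]"
  have M: "v' \<in> vert n m {0,1} \<and> Yadj n m v v' \<and>
    (\<forall>k<m+2. k \<noteq> j \<and> k \<noteq> j + 1 \<longrightarrow> v!k = v'!k) \<and>
    v!j = cnorm n m j (v'!j - d) \<and> v!(j+1) = cnorm n m (j+1) (v'!(j+1) + d)"
    using move[OF n Suc.prems(1) j d c1 c2] unfolding v'_def by blast
  have "flow n m v v' ((\<lambda>_. 0)(j := 0 + d))"
    using flow_step[OF flow_refl j, where y=v' and d=d] M by blast
  note fc = flow_comp[OF Suc.prems(2) this]
  have fl': "flow n m v' u (f(j := f j - d))"
  proof -
    have "(\<lambda>ja. f ja - ((\<lambda>_. 0)(j := 0 + d)) ja) = f(j := f j - d)" by (auto simp: fun_eq_iff)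
    then show ?thesis using fc by simp
  qed
  have "cost m (f(j := f j - d)) = k"
    using cost_upd[OF j, of f "f j - d"] Suc.prems(3) sg by auto
  then have "(Yadj n m ^^ k) v' u" using Suc.IH M fl' by blast
  then show ?case using M by (metis relpowp_Suc_I2)
qed

lemma vsub_self: "u \<in> vert n m S \<Longrightarrow> vsub n m u u = replicate (m+2) 0"
  by (rule nth_equalityI) (auto simp: vsub_def cnorm_def nth_Cons' simp del: upt_Suc)

lemma flow_conv:
  assumes fl: "flow n m (vsub n m v u) z f" and z: "\<forall>j<m+2. z!j = 0"
  shows "flow n m v u f"
  unfolding flow_def
proof (intro conjI ballI)
  have a: "int n dvd (0 - cnorm n m 0 (v!0 - u!0) - f 0)" using fl z by (simp add: flow_def vsub_nth)
  have "u!0 - v!0 - f 0 = (0 - cnorm n m 0 (v!0 - u!0) - f 0) + (cnorm n m 0 (v!0 - u!0) - (v!0 - u!0))"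
    by simp
  then show "int n dvd u!0 - v!0 - f 0" using a cnorm_dvd by (metis dvd_add)
next
  have a: "int n dvd (0 - cnorm n m (m+1) (v!(m+1) - u!(m+1)) + f m)" using fl z by (simp add: flow_def vsub_nth)
  have "u!(m+1) - v!(m+1) + f m = (0 - cnorm n m (m+1) (v!(m+1) - u!(m+1)) + f m) + (cnorm n m (m+1) (v!(m+1) - u!(m+1)) - (v!(m+1) - u!(m+1)))"
    by simp
  then show "int n dvd u!(m+1) - v!(m+1) + f m" using a cnorm_dvd by (metis dvd_add)
next
  fix j assume j: "j \<in> {1..m}"
  then have "0 = cnorm n m j (v!j - u!j) + f j - f (j-1)" using fl z[rule_format, of j]
    by (auto simp: flow_def vsub_nth)
  then show "u!j = v!j + f j - f (j-1)" using j by (simp add: cnorm_mid)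
qed

theorem lemma4p4:
  fixes n m :: nat and v u :: "int list"
  assumes "n \<ge> 1"
    and "v \<in> vert n m {0, 1}" and "u \<in> vert n m {0, 1}"
  shows "vsub n m v u \<in> vert n m {-1, 0, 1}
    \<and> gdist (Yadj n m) v u = gdist (Zadj n m) (vsub n m v u) (replicate (m + 2) 0)"
proof
  note n = assms(1) and v = assms(2) and u = assms(3)
  show "vsub n m v u \<in> vert n m {-1, 0, 1}" by (rule vsub_vert[OF n v u])
  have le1: "gdist (Zadj n m) (vsub n m v u) (replicate (m + 2) 0) \<le> gdist (Yadj n m) v u"
    unfolding gdist_def
  proof (rule Inf_mono)
    fix b assume "b \<in> {enat k |k. (Yadj n m ^^ k) v u}"
    then obtain k where b: "b = enat k" and w: "(Yadj n m ^^ k) v u" by blast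
    have "(Zadj n m ^^ k) (vsub n m v u) (replicate (m + 2) 0)"
      using walk_map[OF n u w] vsub_self[OF u] by simp
    then show "\<exists>a\<in>{enat k |k. (Zadj n m ^^ k) (vsub n m v u) (replicate (m + 2) 0)}. a \<le> b"
      using b by blast
  qed
  have le2: "gdist (Yadj n m) v u \<le> gdist (Zadj n m) (vsub n m v u) (replicate (m + 2) 0)"
    unfolding gdist_def
  proof (rule Inf_mono)
    fix b assume "b \<in> {enat k |k. (Zadj n m ^^ k) (vsub n m v u) (replicate (m + 2) 0)}"
    then obtain k where b: "b = enat k" and w: "(adj n m {-1,0,1} ^^ k) (vsub n m v u) (replicate (m + 2) 0)"
      by (auto simp: Zadj_def)
    obtain f where fl: "flow n m (vsub n m v u) (replicate (m + 2) 0) f" and c: "cost m f \<le> k"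
      using walk_flow[OF w] by blast
    have rz: "\<forall>j<m+2. replicate (m+2) (0::int) ! j = 0" by (simp del: replicate_Suc)
    have "(Yadj n m ^^ cost m f) v u" using build[OF n u v flow_conv[OF fl rz] refl] .
    then show "\<exists>a\<in>{enat k |k. (Yadj n m ^^ k) v u}. a \<le> b"
      using b c by fastforce
  qed
  show "gdist (Yadj n m) v u = gdist (Zadj n m) (vsub n m v u) (replicate (m + 2) 0)"
    using le1 le2 by (rule antisym[rotated])
qed

end
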